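(* Let $\Omega\subset\mathbb R^d$ be bounded and convex, let $\sigma_a,\sigma_b$ be bounded positive functions on $\Omega$, and suppose there is no scattering ($\sigma_s\equiv 0$). Fix a direction $\mathbf v'\in\mathbb S^{d-1}$ and a point $\mathbf x\in\Omega$, set $\mathbf x':=\mathbf x-\tau_-(\mathbf x,\mathbf v')\mathbf v'\in\partial\Omega$, $\widetilde\sigma_a(s):=\sigma_a(\mathbf x'+s\mathbf v')$, $\widetilde\sigma_b(s):=\sigma_b(\mathbf x'+s\mathbf v')$. For $j=1,2$, let $u_j\ge 0$ be the solution of $\mathbf v\cdot\nabla u_j+\sigma_a u_j+\sigma_b\langle u_j\rangle u_j=0$ in $\Omega\times\mathbb S^{d-1}$ with collimated incoming boundary source $u_j=\mathfrak g_j(\mathbf x)\delta(\mathbf v-\mathbf v')$, and let $\phi_j(s):=\langle u_j\rangle(\mathbf x'+s\mathbf v')$, which satisfies \[ \phi_j(t)=\mathfrak g_j(\mathbf x')\exp\Big(-\int_0^t\big(\widetilde\sigma_a(s)+\widetilde\sigma_b(s)\phi_j(s)\big)ds\Big),\qquad t\in[0,\tau_-(\mathbf x,\mathbf v')]. \] If $\mathfrak g_1>\mathfrak g_2>0$, then $\phi_1(t)>\phi_2(t)$ for all $t\in[0,\tau_-(\mathbf x,\mathbf v')]$.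
   Context: $\mathbb S^{d-1}$ is the unit sphere with normalized surface measure $d\mathbf v$ and $\langle u\rangle(\mathbf x):=\int_{\mathbb S^{d-1}}u(\mathbf x,\mathbf v)d\mathbf v$. For $(\mathbf x,\mathbf v)\in\Omega\times\mathbb S^{d-1}$, $\tau_-(\mathbf x,\mathbf v):=\sup\{s\in\mathbb R:\mathbf x-s\mathbf v\in\Omega\}$. The boundary strengths $\mathfrak g_1,\mathfrak g_2$ are functions on $\partial\Omega$. *)

theory Defs
  imports "HOL-Analysis.Analysis"
begin

definition tau_minus :: "'a::real_normed_vector set \<Rightarrow> 'a \<Rightarrow> 'a \<Rightarrow> real" where
  "tau_minus \<Omega> x v = Sup {s::real. x - s *\<^sub>R v \<in> \<Omega>}"

end

theory Submission
  imports Defs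
begin


lemma integral_le_open_const:
  fixes f :: "real \<Rightarrow> real"
  assumes "f integrable_on {a..b}" "a \<le> b" "\<And>s. s \<in> {a<..<b} \<Longrightarrow> f s \<le> c"
  shows "integral {a..b} f \<le> c * (b - a)"
proof -
  define g where "g = (\<lambda>s. if s \<in> {a<..<b} then f s else c)"
  have 1: "(g has_integral integral {a..b} f) {a..b}"
  proof (rule has_integral_spike_finite[where S="{a,b}" and f=f])
      show "finite {a,b}" by simp
      show "\<And>x. x \<in> {a..b} - {a,b} \<Longrightarrow> g x = f x" unfolding g_def by auto
      show "(f has_integral integral {a..b} f) {a..b}" using assms(1) by (rule integrable_integral)
    qed
  have 2: "((\<lambda>s. c) has_integral c * (b - a)) {a..b}"
    using has_integral_const_real[of c a b] assms(2) by (simp add: mult.commute)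
  have 3: "\<And>x. x \<in> {a..b} \<Longrightarrow> g x \<le> c" unfolding g_def using assms(3) by simp
  show ?thesis
    using has_integral_le[OF 1 2 3] .
qed

lemma integral_ge_open_const:
  fixes f :: "real \<Rightarrow> real"
  assumes "f integrable_on {a..b}" "a \<le> b" "\<And>s. s \<in> {a<..<b} \<Longrightarrow> c \<le> f s"
  shows "c * (b - a) \<le> integral {a..b} f"
proof -
  define g where "g = (\<lambda>s. if s \<in> {a<..<b} then f s else c)"
  have 1: "(g has_integral integral {a..b} f) {a..b}"
  proof (rule has_integral_spike_finite[where S="{a,b}" and f=f])
      show "finite {a,b}" by simp
      show "\<And>x. x \<in> {a..b} - {a,b} \<Longrightarrow> g x = f x" unfolding g_def by auto
      show "(f has_integral integral {a..b} f) {a..b}" using assms(1) by (rule integrable_integral)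
    qed
  have 2: "((\<lambda>s. c) has_integral c * (b - a)) {a..b}"
    using has_integral_const_real[of c a b] assms(2) by (simp add: mult.commute)
  have 3: "\<And>x. x \<in> {a..b} \<Longrightarrow> c \<le> g x" unfolding g_def using assms(3) by simp
  show ?thesis
    using has_integral_le[OF 2 1 3] .
qed



theorem lemma3p1:
  fixes \<Omega> :: "'a::euclidean_space set"
    and \<sigma>a \<sigma>b :: "'a \<Rightarrow> real"
    and g1 g2 :: "'a \<Rightarrow> real"
    and \<phi>1 \<phi>2 :: "real \<Rightarrow> real"
    and x v' :: 'a
  assumes "bounded \<Omega>" and "convex \<Omega>"
    and "\<forall>y\<in>\<Omega>. \<sigma>a y > 0" and "\<exists>M. \<forall>y\<in>\<Omega>. \<sigma>a y \<le> M"
    and "\<forall>y\<in>\<Omega>. \<sigma>b y > 0" and "\<exists>M. \<forall>y\<in>\<Omega>. \<sigma>b y \<le> M"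
    and "norm v' = 1" and "x \<in> \<Omega>"
    and "\<forall>y\<in>frontier \<Omega>. g1 y > g2 y \<and> g2 y > 0"
    and "\<forall>t\<in>{0..tau_minus \<Omega> x v'}.
           (\<lambda>s. \<sigma>a ((x - tau_minus \<Omega> x v' *\<^sub>R v') + s *\<^sub>R v')
                + \<sigma>b ((x - tau_minus \<Omega> x v' *\<^sub>R v') + s *\<^sub>R v') * \<phi>1 s) integrable_on {0..t}
         \<and> \<phi>1 t = g1 (x - tau_minus \<Omega> x v' *\<^sub>R v') *
             exp (- integral {0..t} (\<lambda>s. \<sigma>a ((x - tau_minus \<Omega> x v' *\<^sub>R v') + s *\<^sub>R v')
                + \<sigma>b ((x - tau_minus \<Omega> x v' *\<^sub>R v') + s *\<^sub>R v') * \<phi>1 s))"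
    and "\<forall>t\<in>{0..tau_minus \<Omega> x v'}.
           (\<lambda>s. \<sigma>a ((x - tau_minus \<Omega> x v' *\<^sub>R v') + s *\<^sub>R v')
                + \<sigma>b ((x - tau_minus \<Omega> x v' *\<^sub>R v') + s *\<^sub>R v') * \<phi>2 s) integrable_on {0..t}
         \<and> \<phi>2 t = g2 (x - tau_minus \<Omega> x v' *\<^sub>R v') *
             exp (- integral {0..t} (\<lambda>s. \<sigma>a ((x - tau_minus \<Omega> x v' *\<^sub>R v') + s *\<^sub>R v')
                + \<sigma>b ((x - tau_minus \<Omega> x v' *\<^sub>R v') + s *\<^sub>R v') * \<phi>2 s))"
  shows "\<forall>t\<in>{0..tau_minus \<Omega> x v'}. \<phi>1 t > \<phi>2 t"
proof -
  define T where "T = tau_minus \<Omega> x v'"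
  define x0 where "x0 = x - T *\<^sub>R v'"
  define f1 where "f1 = (\<lambda>s. \<sigma>a (x0 + s *\<^sub>R v') + \<sigma>b (x0 + s *\<^sub>R v') * \<phi>1 s)"
  define f2 where "f2 = (\<lambda>s. \<sigma>a (x0 + s *\<^sub>R v') + \<sigma>b (x0 + s *\<^sub>R v') * \<phi>2 s)"
  define g1x where "g1x = g1 x0"
  define g2x where "g2x = g2 x0"
  have E1: "\<forall>t\<in>{0..T}. f1 integrable_on {0..t} \<and> \<phi>1 t = g1x * exp (- integral {0..t} f1)"
    using assms(10) unfolding T_def x0_def f1_def g1x_def by simp
  have E2: "\<forall>t\<in>{0..T}. f2 integrable_on {0..t} \<and> \<phi>2 t = g2x * exp (- integral {0..t} f2)"
    using assms(11) unfolding T_def x0_def f2_def g2x_def by simp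
  define A where "A = {s::real. x - s *\<^sub>R v' \<in> \<Omega>}"
  have TA: "T = Sup A" unfolding T_def A_def tau_minus_def by simp
  obtain M where M: "\<forall>y\<in>\<Omega>. norm y \<le> M" using assms(1) unfolding bounded_iff by auto
  have bdd: "bdd_above A"
  proof (rule bdd_aboveI)
    fix s assume "s \<in> A"
    then have "norm (x - s *\<^sub>R v') \<le> M" using M unfolding A_def by auto
    moreover have "s \<le> norm (s *\<^sub>R v')" using assms(7) by simp
    moreover have "norm (s *\<^sub>R v') \<le> norm x + norm (x - s *\<^sub>R v')"
      by (metis add_diff_cancel_left' diff_add_cancel norm_triangle_ineq4)
    ultimately show "s \<le> norm x + M" by linarith
  qed
  have A0: "0 \<in> A" using assms(8) unfolding A_def by simp
  have Ane: "A \<noteq> {}" using A0 by auto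
  have T0: "0 \<le> T" unfolding TA using cSup_upper[OF A0 bdd] .
  have inO: "x0 + s *\<^sub>R v' \<in> \<Omega>" if "0 < s" "s \<le> T" for s
  proof -
    have "T - s < Sup A" using that TA by simp
    then obtain s' where s': "s' \<in> A" "T - s < s'" using less_cSupD[OF Ane] by blast
    have s'p: "0 < s'" using s' that by simp
    define u where "u = (T - s) / s'"
    have u: "0 \<le> u" "u \<le> 1" unfolding u_def using s' s'p that by (auto simp: field_simps)
    have "(1 - u) *\<^sub>R x + u *\<^sub>R (x - s' *\<^sub>R v') \<in> \<Omega>"
      using convexD[OF assms(2) assms(8), of "x - s' *\<^sub>R v'" "1 - u" u] s' u unfolding A_def by auto
    moreover have "(1 - u) *\<^sub>R x + u *\<^sub>R (x - s' *\<^sub>R v') = x0 + s *\<^sub>R v'"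
    proof -
      have us: "u * s' = T - s" using s'p unfolding u_def by simp
      have "(1 - u) *\<^sub>R x + u *\<^sub>R (x - s' *\<^sub>R v') = x - (u * s') *\<^sub>R v'"
        by (simp add: algebra_simps)
      also have "\<dots> = x0 + s *\<^sub>R v'" unfolding us x0_def by (simp add: algebra_simps)
      finally show ?thesis .
    qed
    ultimately show ?thesis by simp
  qed
  have fr: "x0 \<in> frontier \<Omega>"
  proof -
    have "x0 \<in> closure \<Omega>"
    proof (subst closure_approachable, intro allI impI)
      fix e :: real assume e: "0 < e"
      have "T - e < Sup A" using e TA by simp
      then obtain s' where s': "s' \<in> A" "T - e < s'" using less_cSupD[OF Ane] by blast
      have "s' \<le> T" unfolding TA using cSup_upper[OF s'(1) bdd] .
      have "dist (x - s' *\<^sub>R v') x0 = norm ((T - s') *\<^sub>R v')"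
        unfolding x0_def dist_norm by (simp add: algebra_simps)
      also have "\<dots> = T - s'" using assms(7) \<open>s' \<le> T\<close> by simp
      finally show "\<exists>y\<in>\<Omega>. dist y x0 < e" using s' unfolding A_def by (intro bexI[of _ "x - s' *\<^sub>R v'"]) auto
    qed
    moreover have "x0 \<notin> interior \<Omega>"
    proof
      assume "x0 \<in> interior \<Omega>"
      then obtain e where e: "0 < e" "ball x0 e \<subseteq> \<Omega>" using mem_interior by blast
      have "dist x0 (x - (T + e/2) *\<^sub>R v') = norm ((e/2) *\<^sub>R v')"
        unfolding x0_def dist_norm by (simp add: algebra_simps)
      also have "\<dots> < e" using assms(7) e by simp
      finally have "T + e/2 \<in> A" using e unfolding A_def by auto
      then have "T + e/2 \<le> T" unfolding TA using cSup_upper[OF _ bdd] TA by metis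
      then show False using e by simp
    qed
    ultimately show ?thesis unfolding frontier_def by simp
  qed
  have g: "g2x < g1x" "0 < g2x" using assms(9) fr unfolding g1x_def g2x_def by auto
  obtain B where B: "\<forall>y\<in>\<Omega>. \<sigma>b y \<le> B" using assms(6) by auto
  have Bp: "0 < B" using B assms(5) assms(8) by force
  have f1int: "f1 integrable_on {0..T}" using E1 T0 by auto
  have f2int: "f2 integrable_on {0..T}" using E2 T0 by auto
  define F1 where "F1 = (\<lambda>t. integral {0..t} f1)"
  define F2 where "F2 = (\<lambda>t. integral {0..t} f2)"
  have cF1: "continuous_on {0..T} F1" unfolding F1_def by (rule indefinite_integral_continuous_1[OF f1int])
  have cF2: "continuous_on {0..T} F2" unfolding F2_def by (rule indefinite_integral_continuous_1[OF f2int])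
  have P1: "\<And>t. t \<in> {0..T} \<Longrightarrow> \<phi>1 t = g1x * exp (- F1 t)" using E1 unfolding F1_def by auto
  have P2: "\<And>t. t \<in> {0..T} \<Longrightarrow> \<phi>2 t = g2x * exp (- F2 t)" using E2 unfolding F2_def by auto
  have c1: "continuous_on {0..T} \<phi>1"
  proof -
    have "continuous_on {0..T} (\<lambda>t. g1x * exp (- F1 t))" by (intro continuous_intros cF1)
    then show ?thesis using continuous_on_cong[of "{0..T}" "{0..T}" \<phi>1 "\<lambda>t. g1x * exp (- F1 t)"] P1 by simp
  qed
  have c2: "continuous_on {0..T} \<phi>2"
  proof -
    have "continuous_on {0..T} (\<lambda>t. g2x * exp (- F2 t))" by (intro continuous_intros cF2)
    then show ?thesis using continuous_on_cong[of "{0..T}" "{0..T}" \<phi>2 "\<lambda>t. g2x * exp (- F2 t)"] P2 by simp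
  qed
  have pos1: "\<And>t. t \<in> {0..T} \<Longrightarrow> 0 < \<phi>1 t" using P1 g by simp
  have pos2: "\<And>t. t \<in> {0..T} \<Longrightarrow> 0 < \<phi>2 t" using P2 g by simp
  have at0: "\<phi>1 0 = g1x" "\<phi>2 0 = g2x" using P1[of 0] P2[of 0] T0 unfolding F1_def F2_def by auto
  have sa: "\<And>s. 0 < s \<Longrightarrow> s \<le> T \<Longrightarrow> 0 < \<sigma>a (x0 + s *\<^sub>R v')" using inO assms(3) by blast
  have sb: "\<And>s. 0 < s \<Longrightarrow> s \<le> T \<Longrightarrow> 0 < \<sigma>b (x0 + s *\<^sub>R v')" using inO assms(5) by blast
  have sB: "\<And>s. 0 < s \<Longrightarrow> s \<le> T \<Longrightarrow> \<sigma>b (x0 + s *\<^sub>R v') \<le> B" using inO B by blast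
  have le1: "\<phi>1 t \<le> g1x" if t: "t \<in> {0..T}" for t
  proof -
    have "0 * (t - 0) \<le> F1 t" unfolding F1_def
    proof (rule integral_ge_open_const)
      show "f1 integrable_on {0..t}" using E1 t by auto
      show "0 \<le> t" using t by auto
      fix s assume s: "s \<in> {0<..<t}"
      then have "0 < \<sigma>a (x0 + s *\<^sub>R v')" "0 < \<sigma>b (x0 + s *\<^sub>R v')" "0 < \<phi>1 s"
        using sa sb pos1 t by auto
      then show "0 \<le> f1 s" unfolding f1_def by simp
    qed
    then show ?thesis using P1[OF t] g by (simp add: mult_left_le)
  qed
  show ?thesis
  proof (rule ccontr)
    assume "\<not> ?thesis"
    then obtain t1 where t1: "t1 \<in> {0..T}" "\<phi>1 t1 \<le> \<phi>2 t1" unfolding T_def by force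
    define S where "S = {t \<in> {0..T}. \<phi>1 t \<le> \<phi>2 t}"
    have clS: "closed S" unfolding S_def by (rule continuous_on_closed_Collect_le[OF c1 c2]) simp
    have Sne: "S \<noteq> {}" using t1 unfolding S_def by auto
    have Sbdd: "bdd_below S" unfolding S_def by (rule bdd_belowI[of _ 0]) auto
    define t0 where "t0 = Inf S"
    have t0S: "t0 \<in> S" unfolding t0_def by (rule closed_contains_Inf[OF Sne Sbdd clS])
    have t0T: "0 \<le> t0" "t0 \<le> T" "\<phi>1 t0 \<le> \<phi>2 t0" using t0S unfolding S_def by auto
    have before: "\<phi>2 s < \<phi>1 s" if "0 \<le> s" "s < t0" for s
    proof (rule ccontr)
      assume "\<not> \<phi>2 s < \<phi>1 s"
      then have "s \<in> S" unfolding S_def using that t0T by auto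
      then have "t0 \<le> s" unfolding t0_def by (rule cInf_lower[OF _ Sbdd])
      then show False using that by simp
    qed
    have t0p: "0 < t0"
    proof (rule ccontr)
      assume "\<not> 0 < t0"
      then have "t0 = 0" using t0T by simp
      then show False using t0T(3) at0 g by simp
    qed
    define H where "H = (\<lambda>t. ln (\<phi>1 t) - ln (\<phi>2 t))"
    have lnP1: "ln (\<phi>1 t) = ln g1x - F1 t" if "t \<in> {0..T}" for t
      using P1[OF that] g by (simp add: ln_mult)
    have lnP2: "ln (\<phi>2 t) = ln g2x - F2 t" if "t \<in> {0..T}" for t
      using P2[OF that] g by (simp add: ln_mult)
    have Hdiff: "H r - H t = integral {r..t} (\<lambda>s. f1 s - f2 s)" if rt: "0 \<le> r" "r \<le> t" "t \<le> T" for r t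
    proof -
      have i1: "f1 integrable_on {0..t}" "f2 integrable_on {0..t}" using E1 E2 rt by auto
      have i1': "f1 integrable_on {r..t}" "f2 integrable_on {r..t}"
        using integrable_subinterval_real[OF i1(1)] integrable_subinterval_real[OF i1(2)] rt by auto
      have "F1 t = F1 r + integral {r..t} f1" unfolding F1_def
        using Henstock_Kurzweil_Integration.integral_combine[OF rt(1) rt(2) i1(1)] by simp
      moreover have "F2 t = F2 r + integral {r..t} f2" unfolding F2_def
        using Henstock_Kurzweil_Integration.integral_combine[OF rt(1) rt(2) i1(2)] by simp
      moreover have "H r = ln g1x - F1 r - (ln g2x - F2 r)" "H t = ln g1x - F1 t - (ln g2x - F2 t)"
        unfolding H_def using lnP1 lnP2 rt by auto
      ultimately show ?thesis using integral_diff[OF i1'] by simp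
    qed
    have diffeq: "f1 s - f2 s = \<sigma>b (x0 + s *\<^sub>R v') * (\<phi>1 s - \<phi>2 s)" for s
      unfolding f1_def f2_def by (simp add: algebra_simps)
    have Hmono: "H t \<le> H r" if rt: "0 \<le> r" "r \<le> t" "t \<le> t0" for r t
    proof -
      have "0 * (t - r) \<le> integral {r..t} (\<lambda>s. f1 s - f2 s)"
      proof (rule integral_ge_open_const)
        have i1: "f1 integrable_on {0..t}" "f2 integrable_on {0..t}" using E1 E2 rt t0T by auto
        show "(\<lambda>s. f1 s - f2 s) integrable_on {r..t}"
          using integrable_subinterval_real[OF i1(1)] integrable_subinterval_real[OF i1(2)] rt
          by (intro integrable_diff) auto
        show "r \<le> t" by fact
        fix s assume s: "s \<in> {r<..<t}"
        then have "0 < \<sigma>b (x0 + s *\<^sub>R v')" "\<phi>2 s < \<phi>1 s" using sb before rt t0T by auto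
        then show "0 \<le> f1 s - f2 s" unfolding diffeq by simp
      qed
      then show ?thesis using Hdiff[of r t] rt t0T by simp
    qed
    have Hnn: "0 \<le> H s" if "0 \<le> s" "s < t0" for s
      using before[OF that] pos2[of s] that t0T unfolding H_def by simp
    define L where "L = B * g1x"
    have Lp: "0 < L" unfolding L_def using Bp g by simp
    have Hb: "H r * (1 - L * (t - r)) \<le> H t" if rt: "0 \<le> r" "r \<le> t" "t \<le> t0" for r t
    proof -
      have "integral {r..t} (\<lambda>s. f1 s - f2 s) \<le> (L * H r) * (t - r)"
      proof (rule integral_le_open_const)
        have i1: "f1 integrable_on {0..t}" "f2 integrable_on {0..t}" using E1 E2 rt t0T by auto
        show "(\<lambda>s. f1 s - f2 s) integrable_on {r..t}"
          using integrable_subinterval_real[OF i1(1)] integrable_subinterval_real[OF i1(2)] rt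
          by (intro integrable_diff) auto
        show "r \<le> t" by fact
        fix s assume s: "s \<in> {r<..<t}"
        have sT: "s \<in> {0..T}" "0 < s" "s \<le> T" using s rt t0T by auto
        have lt: "\<phi>2 s < \<phi>1 s" using before s rt by auto
        have p1: "0 < \<phi>1 s" "0 < \<phi>2 s" using pos1 pos2 sT by auto
        have e1: "\<phi>2 s = \<phi>1 s * exp (- H s)" unfolding H_def using p1
          by (simp add: exp_diff)
        have e2: "1 - exp (- H s) \<le> H s" using exp_ge_add_one_self[of "- H s"] by simp
        have Hs: "0 \<le> H s" "H s \<le> H r" using Hnn[of s] Hmono[of r s] s rt by auto
        have "\<phi>1 s - \<phi>2 s = \<phi>1 s * (1 - exp (- H s))" using e1 by (simp add: algebra_simps)
        also have "\<dots> \<le> \<phi>1 s * H s" using e2 p1 by (simp add: mult_left_mono)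
        also have "\<dots> \<le> g1x * H s" using le1[OF sT(1)] Hs by (simp add: mult_right_mono)
        finally have d1: "\<phi>1 s - \<phi>2 s \<le> g1x * H s" .
        have "f1 s - f2 s \<le> B * (\<phi>1 s - \<phi>2 s)" unfolding diffeq
          using sB[OF sT(2,3)] lt by (simp add: mult_right_mono)
        also have "\<dots> \<le> B * (g1x * H s)" using d1 Bp by simp
        also have "\<dots> \<le> B * (g1x * H r)" using Hs Bp g by simp
        finally show "f1 s - f2 s \<le> L * H r" unfolding L_def by simp
      qed
      then show ?thesis using Hdiff[of r t] rt t0T by (simp add: algebra_simps)
    qed
    define H0 where "H0 = H 0"
    have H0p: "0 < H0" unfolding H0_def H_def using at0 g by simp
    define \<delta> where "\<delta> = 1 / (2 * L)"
    have dp: "0 < \<delta>" unfolding \<delta>_def using Lp by simp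
    have claim: "\<forall>t. 0 \<le> t \<longrightarrow> t \<le> t0 \<longrightarrow> t \<le> real n * \<delta> \<longrightarrow> H0 / 2 ^ n \<le> H t" for n
    proof (induction n)
      case 0
      then show ?case unfolding H0_def by auto
    next
      case (Suc n)
      show ?case
      proof (intro allI impI)
        fix t assume t: "0 \<le> t" "t \<le> t0" "t \<le> real (Suc n) * \<delta>"
        have hh: "H0 / 2 ^ Suc n \<le> H0 / 2 ^ n" using H0p by (simp add: divide_left_mono)
        show "H0 / 2 ^ Suc n \<le> H t"
        proof (cases "t \<le> real n * \<delta>")
          case True
          then show ?thesis using Suc.IH t hh by auto
        next
          case False
          define r where "r = real n * \<delta>"
          have r: "0 \<le> r" "r \<le> t" "t - r \<le> \<delta>" using False t dp unfolding r_def
            by (auto simp: algebra_simps)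
          have Hr: "H0 / 2 ^ n \<le> H r" using Suc.IH r t unfolding r_def by auto
          have Hr0: "0 \<le> H r" using Hr H0p by (smt (verit) divide_nonneg_pos zero_less_power)
          have "L * (t - r) \<le> L * \<delta>" using r Lp by simp
          also have "\<dots> = 1/2" unfolding \<delta>_def using Lp by simp
          finally have "1/2 \<le> 1 - L * (t - r)" by simp
          then have "H r * (1/2) \<le> H r * (1 - L * (t - r))" using Hr0 by (rule mult_left_mono)
          also have "\<dots> \<le> H t" using Hb[of r t] r t by simp
          finally show ?thesis using Hr by simp
        qed
      qed
    qed
    obtain n where n: "t0 < real n * \<delta>" using ex_less_of_nat_mult[OF dp] by blast
    have "H0 / 2 ^ n \<le> H t0" using claim[of n] n t0T by auto
    then have "0 < H t0" using H0p by (smt (verit) divide_pos_pos zero_less_power)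
    then have "\<phi>2 t0 < \<phi>1 t0" unfolding H_def using pos1 pos2 t0T by simp
    then show False using t0T by simp
  qed
qed

end
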